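(* Let $X$ be a complex K3 surface, let $K_{\mathrm{num}}(X)$ be its numerical Grothendieck group equipped with the Mukai pairing $(\,,\,)$, and let $s=v(\mathcal{E})$ be the Mukai vector of a spherical object $\mathcal{E}\in D^b(X)$. Let $s^\perp_+\subset K_{\mathrm{num}}(X)\otimes\mathbb{R}$ be the set of classes $v$ with $(v,s)=0$ and $v^2>0$. Then, up to rescaling, the set of integral classes $v\in s^\perp_+$ such that $2v^2$ is not a square is dense in $s^\perp_+$; that is, the set of positive real multiples of such integral classes is dense in $s^\perp_+$.
   Context: $K_{\mathrm{num}}(X)$ is identified with the algebraic Mukai lattice $H^0(X,\mathbb{Z})\oplus\mathrm{NS}(X)\oplus H^4(X,\mathbb{Z})$ via the Mukai vector $v(E)=\mathrm{ch}(E)\sqrt{\mathrm{td}(X)}$, with pairing $((r_1,c_1,m_1),(r_2,c_2,m_2))=c_1c_2-r_1m_2-r_2m_1$; it has signature $(2,\rho)$ where $\rho$ is the Picard rank. A spherical object satisfies $\mathbf{R}\mathrm{Hom}(\mathcal{E},\mathcal{E})\cong\mathbb{C}\oplus\mathbb{C}[-2]$; $v^2$ means $(v,v)$; "square" means square of an integer. *)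

theory Defs
  imports "HOL-Analysis.Analysis"
begin

text \<open>Abstract model of the algebraic Mukai lattice
  K_num(X) = H^0 + NS(X) + H^4.  NS(X) is Z^rho with an integral symmetric
  Gram matrix Q (index type 'n, CARD('n) = rho).  Real Mukai vectors are
  triples (r, c, m) :: real * real^'n * real.\<close>

definition ns_form :: "int^'n^'n \<Rightarrow> real^'n \<Rightarrow> real^'n \<Rightarrow> real" where
  "ns_form Q c d = (\<Sum>i\<in>UNIV. \<Sum>j\<in>UNIV. c$i * real_of_int (Q$i$j) * d$j)"

definition mukai_pair ::
  "int^'n^'n \<Rightarrow> real \<times> (real^'n) \<times> real \<Rightarrow> real \<times> (real^'n) \<times> real \<Rightarrow> real" where
  "mukai_pair Q v w =
     ns_form Q (fst (snd v)) (fst (snd w))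
       - fst v * snd (snd w) - fst w * snd (snd v)"

definition integral_class :: "real \<times> (real^'n) \<times> real \<Rightarrow> bool" where
  "integral_class v =
     (fst v \<in> \<int> \<and> (\<forall>i. fst (snd v) $ i \<in> \<int>) \<and> snd (snd v) \<in> \<int>)"

text \<open>Q is the Gram matrix of an even lattice of signature (1, rho-1)
  (as the Neron-Severi lattice of a K3 surface is; rho \<le> 20).\<close>
definition hyperbolic_even_lattice :: "int^'n^'n \<Rightarrow> bool" where
  "hyperbolic_even_lattice Q \<longleftrightarrow>
     transpose Q = Q \<and> (\<forall>i. even (Q$i$i)) \<and>
     (\<exists>(P::real^'n^'n) i0. invertible P \<and>
        transpose P ** (\<chi> i j. real_of_int (Q$i$j)) ** P =
        (\<chi> i j. if i = j then (if i = i0 then 1 else -1) else 0))"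

definition s_perp_plus ::
  "int^'n^'n \<Rightarrow> real \<times> (real^'n) \<times> real \<Rightarrow> (real \<times> (real^'n) \<times> real) set" where
  "s_perp_plus Q s = {v. mukai_pair Q v s = 0 \<and> mukai_pair Q v v > 0}"

end

theory Submission
  imports Defs
begin



lemma ns_add1: "ns_form Q (c + c') d = ns_form Q c d + ns_form Q c' d"
  by (simp add: ns_form_def distrib_right sum.distrib)
lemma ns_add2: "ns_form Q c (d + d') = ns_form Q c d + ns_form Q c d'"
  by (simp add: ns_form_def distrib_left sum.distrib)
lemma ns_scale1: "ns_form Q (a *\<^sub>R c) d = a * ns_form Q c d"
  by (simp add: ns_form_def sum_distrib_left mult.assoc)
lemma ns_scale2: "ns_form Q c (a *\<^sub>R d) = a * ns_form Q c d"
  by (simp add: ns_form_def sum_distrib_left algebra_simps)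
lemma ns_sym: assumes "transpose Q = Q" shows "ns_form Q c d = ns_form Q d c"
proof -
  have q: "Q$j$i = Q$i$j" for i j
  proof -
    have "(transpose Q)$i$j = Q$i$j" using assms by simp
    thus ?thesis by (simp add: transpose_def)
  qed
  show ?thesis unfolding ns_form_def
    apply (subst sum.swap)
    apply (rule sum.cong, simp, rule sum.cong, simp)
    by (simp add: q)
qed

lemma mp_add1: "mukai_pair Q (x + y) z = mukai_pair Q x z + mukai_pair Q y z"
  by (simp add: mukai_pair_def ns_add1 algebra_simps)
lemma mp_add2: "mukai_pair Q z (x + y) = mukai_pair Q z x + mukai_pair Q z y"
  by (simp add: mukai_pair_def ns_add2 algebra_simps)
lemma mp_scale1: "mukai_pair Q (a *\<^sub>R x) z = a * mukai_pair Q x z"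
  by (simp add: mukai_pair_def ns_scale1 algebra_simps)
lemma mp_scale2: "mukai_pair Q z (a *\<^sub>R x) = a * mukai_pair Q z x"
  by (simp add: mukai_pair_def ns_scale2 algebra_simps)
lemma mp_sym: "transpose Q = Q \<Longrightarrow> mukai_pair Q x y = mukai_pair Q y x"
  by (simp add: mukai_pair_def ns_sym algebra_simps)
lemma mp_diff1: "mukai_pair Q (x - y) z = mukai_pair Q x z - mukai_pair Q y z"
  using mp_add1[of Q "x - y" y z] by simp
lemma mp_diff2: "mukai_pair Q z (x - y) = mukai_pair Q z x - mukai_pair Q z y"
  using mp_add2[of Q z "x - y" y] by simp

lemma mp_tendsto:
  assumes "(f \<longlongrightarrow> a) F" "(g \<longlongrightarrow> b) F"
  shows "((\<lambda>n. mukai_pair Q (f n) (g n)) \<longlongrightarrow> mukai_pair Q a b) F"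
  unfolding mukai_pair_def ns_form_def
  by (intro tendsto_intros assms)

lemma int_class_mp:
  assumes "integral_class x" "integral_class y"
  shows "mukai_pair Q x y \<in> \<int>"
  using assms unfolding mukai_pair_def ns_form_def integral_class_def
  by (intro Ints_diff Ints_sum Ints_mult Ints_of_int) auto

lemma int_class_add: "integral_class x \<Longrightarrow> integral_class y \<Longrightarrow> integral_class (x + y)"
  unfolding integral_class_def by auto
lemma int_class_scale: "a \<in> \<int> \<Longrightarrow> integral_class x \<Longrightarrow> integral_class (a *\<^sub>R x)"
  unfolding integral_class_def by auto



lemma ns_inner: "ns_form Q c d = c \<bullet> ((\<chi> i j. real_of_int (Q$i$j)) *v d)"
  by (simp add: ns_form_def inner_vec_def matrix_vector_mult_def sum_distrib_left mult.assoc)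

lemma mp_nondeg:
  assumes H: "hyperbolic_even_lattice Q" and Z: "\<And>y. mukai_pair Q x y = 0"
  shows "x = 0"
proof -
  obtain r c m where x: "x = (r, c, m)" by (cases x) auto
  have "mukai_pair Q x (0,0,1) = 0" using Z by blast
  hence r: "r = 0" by (simp add: x mukai_pair_def ns_form_def)
  have "mukai_pair Q x (1,0,0) = 0" using Z by blast
  hence m: "m = 0" by (simp add: x mukai_pair_def ns_form_def)
  define Qr where "Qr = (\<chi> i j. real_of_int (Q$i$j))"
  obtain P :: "real^'a^'a" and i0 where P: "invertible P"
    and D: "transpose P ** Qr ** P = (\<chi> i j. if i = j then (if i = i0 then 1 else -1) else 0)"
    using H unfolding hyperbolic_even_lattice_def Qr_def by blast
  define Dm :: "real^'a^'a" where "Dm = (\<chi> i j. if i = j then (if i = i0 then 1 else -1) else 0)"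
  obtain P' where P': "P ** P' = mat 1" using P unfolding invertible_def by blast
  define z where "z = P' *v c"
  have cz: "P *v z = c" unfolding z_def by (simp add: matrix_vector_mul_assoc P')
  have DD: "Dm *v (Dm *v v) = v" for v :: "real^'a"
  proof -
    have "(Dm *v v)$i = (if i = i0 then 1 else -1) * v$i" for v :: "real^'a" and i
    proof -
      have "(Dm *v v)$i = (\<Sum>j\<in>UNIV. if i = j then (if i = i0 then 1 else -1) * v$j else 0)"
        unfolding Dm_def matrix_vector_mult_def vec_lambda_beta by (rule sum.cong) auto
      also have "\<dots> = (if i = i0 then 1 else -1) * v$i" by (simp add: sum.delta)
      finally show ?thesis .
    qed
    thus ?thesis by (simp add: vec_eq_iff)
  qed
  have "mukai_pair Q x (0, P *v (Dm *v z), 0) = 0" using Z by blast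
  hence "c \<bullet> (Qr *v (P *v (Dm *v z))) = 0"
    by (simp add: x mukai_pair_def ns_inner Qr_def)
  hence "(P *v z) \<bullet> (Qr *v (P *v (Dm *v z))) = 0" by (simp add: cz)
  hence "z \<bullet> (transpose P *v (Qr *v (P *v (Dm *v z)))) = 0"
    by (metis dot_lmul_matrix vector_transpose_matrix)
  hence "z \<bullet> ((transpose P ** Qr ** P) *v (Dm *v z)) = 0"
    by (simp add: matrix_vector_mul_assoc matrix_mul_assoc)
  hence "z \<bullet> z = 0" using D DD by (simp add: Dm_def)
  hence "z = 0" by simp
  hence "c = 0" using cz by simp
  thus ?thesis using r m x by (simp add: zero_prod_def)
qed



lemma floor_approx: "((\<lambda>N. (1 / real N) * of_int \<lfloor>real N * t\<rfloor>) \<longlongrightarrow> t) sequentially"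
proof (rule tendsto_sandwich[of "\<lambda>N. t - 1 / real N" _ _ "\<lambda>N. t"])
  show "\<forall>\<^sub>F N in sequentially. t - 1 / real N \<le> 1 / real N * of_int \<lfloor>real N * t\<rfloor>"
    using eventually_gt_at_top[of 0]
  proof (rule eventually_mono)
    fix N :: nat assume N: "0 < N"
    have "real N * t - 1 \<le> of_int \<lfloor>real N * t\<rfloor>" by linarith
    hence "(real N * t - 1) / real N \<le> of_int \<lfloor>real N * t\<rfloor> / real N"
      using N by (simp add: divide_right_mono)
    thus "t - 1 / real N \<le> 1 / real N * of_int \<lfloor>real N * t\<rfloor>"
      using N by (simp add: diff_divide_distrib)
  qed
  show "\<forall>\<^sub>F N in sequentially. 1 / real N * of_int \<lfloor>real N * t\<rfloor> \<le> t"
    using eventually_gt_at_top[of 0]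
  proof (rule eventually_mono)
    fix N :: nat assume N: "0 < N"
    have "of_int \<lfloor>real N * t\<rfloor> \<le> real N * t" by linarith
    hence "of_int \<lfloor>real N * t\<rfloor> / real N \<le> (real N * t) / real N"
      using N by (intro divide_right_mono) auto
    moreover have "(real N * t) / real N = t" using N by simp
    moreover have "1 / real N * of_int \<lfloor>real N * t\<rfloor> = of_int \<lfloor>real N * t\<rfloor> / real N" by simp
    ultimately show "1 / real N * of_int \<lfloor>real N * t\<rfloor> \<le> t" by linarith
  qed
  show "((\<lambda>N. t - 1 / real N) \<longlongrightarrow> t) sequentially"
    using tendsto_diff[OF tendsto_const lim_1_over_n, of t] by simp
qed simp

lemma approx_int:
  fixes x :: "real \<times> (real^'n) \<times> real"
  shows "\<exists>e. (\<forall>N. integral_class (e N)) \<and> ((\<lambda>N. (1 / real N) *\<^sub>R e N) \<longlongrightarrow> x) sequentially"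
proof -
  obtain r c m where x: "x = (r, c, m)" by (cases x) auto
  define e where "e N = (real_of_int \<lfloor>real N * r\<rfloor>, (\<chi> i. real_of_int \<lfloor>real N * c$i\<rfloor>),
        real_of_int \<lfloor>real N * m\<rfloor>)" for N :: nat
  have "integral_class (e N)" for N unfolding e_def integral_class_def by simp
  moreover have "((\<lambda>N. (1 / real N) *\<^sub>R e N) \<longlongrightarrow> x) sequentially"
  proof -
    have eq: "(\<lambda>N. (1 / real N) *\<^sub>R e N) = (\<lambda>N. ((1 / real N) * of_int \<lfloor>real N * r\<rfloor>,
       (\<chi> i. (1 / real N) * of_int \<lfloor>real N * c$i\<rfloor>), (1 / real N) * of_int \<lfloor>real N * m\<rfloor>))"
      unfolding e_def by (rule ext) (simp add: vec_eq_iff)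
    have "((\<lambda>N. ((1 / real N) * of_int \<lfloor>real N * r\<rfloor>,
       (\<chi> i. (1 / real N) * of_int \<lfloor>real N * c$i\<rfloor>), (1 / real N) * of_int \<lfloor>real N * m\<rfloor>))
       \<longlongrightarrow> (r, (\<chi> i. c$i), m)) sequentially"
      by (intro tendsto_Pair floor_approx tendsto_vec_lambda)
    thus ?thesis unfolding eq x by simp
  qed
  ultimately show ?thesis by blast
qed

lemma sq_diff_bound:
  fixes X Z D :: int
  assumes "X^2 - Z^2 = D" "D \<noteq> 0" "Z \<ge> 0"
  shows "Z \<le> \<bar>D\<bar>"
proof -
  have "\<bar>X\<bar>^2 - Z^2 = D" using assms(1) by simp
  define Y where "Y = \<bar>X\<bar>"
  have Y: "Y \<ge> 0" "Y^2 - Z^2 = D" using assms(1) unfolding Y_def by auto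
  have "Y \<noteq> Z" using Y assms(2) by auto
  hence "Y \<ge> Z + 1 \<or> Y + 1 \<le> Z" by linarith
  thus ?thesis
  proof
    assume "Y \<ge> Z + 1"
    hence "Y^2 \<ge> (Z+1)^2" using assms(3) by (simp add: power_mono)
    thus ?thesis using Y assms(3) by (simp add: power2_eq_square algebra_simps)
  next
    assume h: "Y + 1 \<le> Z"
    hence "Y^2 \<le> (Z - 1)^2" using Y by (simp add: power_mono)
    moreover have "(Z - 1)^2 = Z^2 - 2*Z + 1" by (simp add: power2_eq_square algebra_simps)
    ultimately show ?thesis using Y h by linarith
  qed
qed



lemmas mp_lin = mp_add1 mp_add2 mp_scale1 mp_scale2 mp_diff1 mp_diff2

lemma exists_u:
  fixes Q :: "int^'n^'n" and s w :: "real \<times> (real^'n) \<times> real"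
  assumes H: "hyperbolic_even_lattice Q" and si: "integral_class s"
    and ss: "mukai_pair Q s s = -2" and ws: "mukai_pair Q w s = 0"
    and wpos: "mukai_pair Q w w > 0"
  shows "\<exists>u. integral_class u \<and> mukai_pair Q u s = 0 \<and>
     mukai_pair Q w w * mukai_pair Q u u \<noteq> (mukai_pair Q w u)^2"
proof (rule ccontr)
  assume "\<not> ?thesis"
  hence A: "\<And>u. integral_class u \<Longrightarrow> mukai_pair Q u s = 0 \<Longrightarrow>
     mukai_pair Q w w * mukai_pair Q u u = (mukai_pair Q w u)^2" by blast
  have sym: "mukai_pair Q x y = mukai_pair Q y x" for x y
    using H mp_sym unfolding hyperbolic_even_lattice_def by blast
  define B where "B = mukai_pair Q"
  define U where "U e = 2 *\<^sub>R e + B e s *\<^sub>R s" for e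
  define F where "F e = B w w * B (U e) (U e) - (B w (U e))^2" for e
  have Fint: "F e = 0" if "integral_class e" for e
  proof -
    have "B e s \<in> \<int>" using int_class_mp[OF that si] B_def by simp
    hence "integral_class (U e)" unfolding U_def
      by (intro int_class_add int_class_scale that si) auto
    moreover have "B (U e) s = 0" unfolding U_def B_def using ss by (simp add: mp_lin)
    ultimately show ?thesis using A unfolding F_def B_def by simp
  qed
  have Fscale: "F (c *\<^sub>R e) = c^2 * F e" for c e
  proof -
    have "U (c *\<^sub>R e) = c *\<^sub>R U e" unfolding U_def B_def by (simp add: mp_lin algebra_simps)
    thus ?thesis unfolding F_def B_def by (simp add: mp_lin power2_eq_square algebra_simps)
  qed
  have F0: "F x = 0" for x
  proof -
    obtain e where e: "\<And>N. integral_class (e N)"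
      and lim: "((\<lambda>N. (1 / real N) *\<^sub>R e N) \<longlongrightarrow> x) sequentially"
      using approx_int by blast
    have "((\<lambda>N. F ((1 / real N) *\<^sub>R e N)) \<longlongrightarrow> F x) sequentially"
      unfolding F_def U_def B_def
      by (intro tendsto_intros mp_tendsto lim)
    moreover have "(\<lambda>N. F ((1 / real N) *\<^sub>R e N)) = (\<lambda>N. 0)"
      using Fscale Fint e by simp
    ultimately have "(\<lambda>N. 0) \<longlonglongrightarrow> F x" by simp
    from LIMSEQ_unique[OF tendsto_const this] show ?thesis by simp
  qed
  define P where "P z = z + (B z s / 2) *\<^sub>R s - (B z w / B w w) *\<^sub>R w" for z
  have wpos': "B w w \<noteq> 0" using wpos B_def by simp
  have sw: "B s w = 0" using ws sym B_def by simp
  have Ps: "B (P z) s = 0" for z unfolding P_def using ss ws unfolding B_def by (simp add: mp_lin)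
  have Pw: "B (P z) w = 0" for z unfolding P_def using sw wpos' unfolding B_def by (simp add: mp_lin)
  have UP: "U ((1/2) *\<^sub>R P z) = P z" for z unfolding U_def B_def using Ps B_def by (simp add: mp_lin)
  have qP: "B (P z) (P z) = 0" for z
  proof -
    have "F ((1/2) *\<^sub>R P z) = 0" by (rule F0)
    hence "B w w * B (P z) (P z) - (B w (P z))^2 = 0" using UP unfolding F_def by simp
    moreover have "B w (P z) = 0" using Pw sym B_def by simp
    ultimately show ?thesis using wpos' by simp
  qed
  have Padd: "P (z + z') = P z + P z'" for z z'
    unfolding P_def B_def by (simp add: mp_lin algebra_simps add_divide_distrib)
  have PP: "B (P z) (P z') = 0" for z z'
  proof -
    have "B (P z + P z') (P z + P z') = 0" using qP[of "z + z'"] Padd by simp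
    hence "B (P z) (P z) + 2 * B (P z) (P z') + B (P z') (P z') = 0"
      using sym unfolding B_def by (simp add: mp_lin)
    thus ?thesis using qP by simp
  qed
  have Pz0: "P z = 0" for z
  proof (rule mp_nondeg[OF H])
    fix z'
    have "z' = P z' - (B z' s / 2) *\<^sub>R s + (B z' w / B w w) *\<^sub>R w" unfolding P_def by simp
    hence "B (P z) z' = B (P z) (P z' - (B z' s / 2) *\<^sub>R s + (B z' w / B w w) *\<^sub>R w)" by simp
    also have "\<dots> = 0" using PP Ps Pw unfolding B_def by (simp add: mp_lin)
    finally show "mukai_pair Q (P z) z' = 0" unfolding B_def .
  qed
  have "z \<in> span {s, w}" for z
  proof -
    have "z = (- (B z s / 2)) *\<^sub>R s + (B z w / B w w) *\<^sub>R w"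
      using Pz0[of z] unfolding P_def by (simp add: algebra_simps)
    also have "\<dots> \<in> span {s, w}"
      by (intro span_add span_scale span_base) auto
    finally show ?thesis .
  qed
  hence "(UNIV :: (real \<times> (real^'n) \<times> real) set) \<subseteq> span {s, w}" by blast
  hence "dim (UNIV :: (real \<times> (real^'n) \<times> real) set) \<le> card {s, w}"
    by (intro dim_le_card) auto
  also have "\<dots> \<le> 2" by (simp add: card_insert_le_m1)
  finally have "DIM(real \<times> (real^'n) \<times> real) \<le> 2" by simp
  moreover have "CARD('n) \<ge> 1" by (simp add: Suc_leI)
  ultimately show False by simp
qed



lemma nonsq:
  fixes ai bi ci k :: int
  assumes k: "2 * ai = k^2" and D: "ai * ci \<noteq> bi^2" and a: "ai > 0"
  shows "eventually (\<lambda>M::nat. \<not> (\<exists>j::int. 2 * (ai * (int M)^2 + 2 * bi * int M + ci) = j^2)) sequentially"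
proof -
  define Dv where "Dv = 4 * (ai * ci - bi^2)"
  have Dv0: "Dv \<noteq> 0" using D unfolding Dv_def by simp
  show ?thesis
    using eventually_ge_at_top[of "nat (\<bar>Dv\<bar> + 2 * \<bar>bi\<bar> + 1)"]
  proof (rule eventually_mono)
    fix M :: nat assume M: "nat (\<bar>Dv\<bar> + 2 * \<bar>bi\<bar> + 1) \<le> M"
    hence Mi: "int M \<ge> \<bar>Dv\<bar> + 2 * \<bar>bi\<bar> + 1" by linarith
    have aM: "ai * int M \<ge> int M" using a by (simp add: mult_right_mono[of 1 ai "int M", simplified])
    define Z where "Z = 2 * ai * int M + 2 * bi"
    have Z0: "Z \<ge> 0" and Zbig: "Z > \<bar>Dv\<bar>" using Mi aM unfolding Z_def by linarith+
    show "\<not> (\<exists>j::int. 2 * (ai * (int M)^2 + 2 * bi * int M + ci) = j^2)"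
    proof
      assume "\<exists>j::int. 2 * (ai * (int M)^2 + 2 * bi * int M + ci) = j^2"
      then obtain j where j: "2 * (ai * (int M)^2 + 2 * bi * int M + ci) = j^2" by blast
      have "(k * j)^2 = k^2 * j^2" by (simp add: power_mult_distrib)
      also have "\<dots> = 2 * ai * (2 * (ai * (int M)^2 + 2 * bi * int M + ci))" using k j by simp
      finally have "(k * j)^2 - Z^2 = Dv" unfolding Z_def Dv_def
        by (simp add: power2_eq_square algebra_simps)
      from sq_diff_bound[OF this Dv0 Z0] show False using Zbig by simp
    qed
  qed
qed



theorem lemmaA3:
  fixes Q :: "int^'n^'n" and s :: "real \<times> (real^'n) \<times> real"
  assumes "hyperbolic_even_lattice Q"
    and "CARD('n) \<le> 20"
    and "integral_class s"
    and "mukai_pair Q s s = -2"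
  shows "s_perp_plus Q s \<subseteq>
    closure {t *\<^sub>R v | t v. t > 0 \<and> integral_class v \<and> v \<in> s_perp_plus Q s \<and>
                 \<not> (\<exists>k::int. 2 * mukai_pair Q v v = of_int (k^2))}"
proof
  note H = assms(1) and si = assms(3) and ss = assms(4)
  have sym: "mukai_pair Q x y = mukai_pair Q y x" for x y
    using H mp_sym unfolding hyperbolic_even_lattice_def by blast
  define B where "B = mukai_pair Q"
  define S where "S = {t *\<^sub>R v | t v. t > 0 \<and> integral_class v \<and> v \<in> s_perp_plus Q s \<and>
                 \<not> (\<exists>k::int. 2 * mukai_pair Q v v = of_int (k^2))}"
  fix v assume "v \<in> s_perp_plus Q s"
  hence vs: "B v s = 0" and vpos: "B v v > 0" unfolding s_perp_plus_def B_def by auto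
  have "v \<in> closure S"
  proof (rule iffD2[OF closure_approachable], intro allI impI)
    fix \<epsilon> :: real assume \<epsilon>: "\<epsilon> > 0"
    obtain e where e: "\<And>N. integral_class (e N)"
      and lim: "((\<lambda>N. (1 / real N) *\<^sub>R e N) \<longlongrightarrow> v) sequentially"
      using approx_int by blast
    define pr where "pr x = x + (B x s / 2) *\<^sub>R s" for x
    have prv: "pr v = v" unfolding pr_def using vs by simp
    have lim2: "((\<lambda>N. pr ((1 / real N) *\<^sub>R e N)) \<longlongrightarrow> v) sequentially"
    proof -
      have "((\<lambda>N. pr ((1 / real N) *\<^sub>R e N)) \<longlongrightarrow> pr v) sequentially"
        unfolding pr_def B_def by (intro tendsto_intros mp_tendsto lim) simp
      thus ?thesis using prv by simp
    qed
    have ev1: "eventually (\<lambda>N. dist (pr ((1 / real N) *\<^sub>R e N)) v < \<epsilon>/2) sequentially"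
      using tendstoD[OF lim2, of "\<epsilon>/2"] \<epsilon> by simp
    have "((\<lambda>N. B (pr ((1 / real N) *\<^sub>R e N)) (pr ((1 / real N) *\<^sub>R e N))) \<longlongrightarrow> B v v) sequentially"
      unfolding B_def by (intro mp_tendsto lim2)
    hence ev2: "eventually (\<lambda>N. B (pr ((1 / real N) *\<^sub>R e N)) (pr ((1 / real N) *\<^sub>R e N)) > 0) sequentially"
      using vpos by (rule order_tendstoD)
    obtain N where N: "N > 0" and dN: "dist (pr ((1 / real N) *\<^sub>R e N)) v < \<epsilon>/2"
      and qN: "B (pr ((1 / real N) *\<^sub>R e N)) (pr ((1 / real N) *\<^sub>R e N)) > 0"
    proof -
      have "eventually (\<lambda>N. N > 0 \<and> dist (pr ((1 / real N) *\<^sub>R e N)) v < \<epsilon>/2 \<and>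
           B (pr ((1 / real N) *\<^sub>R e N)) (pr ((1 / real N) *\<^sub>R e N)) > 0) sequentially"
        by (intro eventually_conj ev1 ev2 eventually_gt_at_top)
      then obtain N0 where "\<forall>N\<ge>N0. N > 0 \<and> dist (pr ((1 / real N) *\<^sub>R e N)) v < \<epsilon>/2 \<and>
           B (pr ((1 / real N) *\<^sub>R e N)) (pr ((1 / real N) *\<^sub>R e N)) > 0"
        unfolding eventually_sequentially by blast
      thus ?thesis using that by blast
    qed
    define w where "w = 2 *\<^sub>R e N + B (e N) s *\<^sub>R s"
    define t0 where "t0 = 1 / (2 * real N)"
    have t0: "t0 > 0" using N unfolding t0_def by simp
    have wpr: "t0 *\<^sub>R w = pr ((1 / real N) *\<^sub>R e N)"
      unfolding w_def t0_def pr_def B_def using N by (simp add: mp_lin algebra_simps)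
    have wi: "integral_class w" unfolding w_def
      using int_class_mp[OF e[of N] si, of Q] B_def
      by (intro int_class_add int_class_scale e si) auto
    have ws: "B w s = 0" unfolding w_def B_def using ss by (simp add: mp_lin)
    have qt0: "B (t0 *\<^sub>R w) (t0 *\<^sub>R w) = t0^2 * B w w" unfolding B_def
      by (simp add: mp_lin power2_eq_square)
    have wpos: "B w w > 0"
    proof -
      have "t0^2 * B w w > 0" using qN wpr qt0 by simp
      thus ?thesis using t0 by (simp add: zero_less_mult_iff)
    qed
    have dw: "dist (t0 *\<^sub>R w) v < \<epsilon>/2" using dN wpr by simp
    have wperp: "w \<in> s_perp_plus Q s" using ws wpos unfolding s_perp_plus_def B_def by simp
    show "\<exists>y\<in>S. dist y v < \<epsilon>"
    proof (cases "\<exists>k::int. 2 * B w w = of_int (k^2)")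
      case False
      have "t0 *\<^sub>R w \<in> S" unfolding S_def using t0 wi wperp False B_def by blast
      thus ?thesis using dw \<epsilon> by force
    next
      case True
      then obtain k :: int where k: "2 * B w w = of_int (k^2)" by blast
      obtain u where ui: "integral_class u" and us: "B u s = 0"
        and uC: "B w w * B u u \<noteq> (B w u)^2"
        using exists_u[OF H si ss ws[unfolded B_def] wpos[unfolded B_def]] B_def by blast
      obtain ai where ai: "B w w = of_int ai" using int_class_mp[OF wi wi] B_def by (auto elim: Ints_cases)
      obtain bi where bi: "B w u = of_int bi" using int_class_mp[OF wi ui] B_def by (auto elim: Ints_cases)
      obtain ci where ci: "B u u = of_int ci" using int_class_mp[OF ui ui] B_def by (auto elim: Ints_cases)
      have k': "2 * ai = k^2" using k ai by (metis of_int_eq_iff of_int_mult of_int_numeral)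
      have C': "ai * ci \<noteq> bi^2" using uC ai bi ci by (metis of_int_eq_iff of_int_mult of_int_power)
      have a0: "ai > 0" using wpos ai by simp
      define wM where "wM M = real M *\<^sub>R w + u" for M :: nat
      have qwM: "B (wM M) (wM M) = of_int (ai * (int M)^2 + 2 * bi * int M + ci)" for M
      proof -
        have "B (wM M) (wM M) = real M * real M * B w w + 2 * real M * B w u + B u u"
          unfolding wM_def B_def using sym[of u w] by (simp add: mp_lin algebra_simps)
        thus ?thesis using ai bi ci by (simp add: power2_eq_square algebra_simps)
      qed
      have ev3: "eventually (\<lambda>M::nat. \<not> (\<exists>j::int. 2 * (ai * (int M)^2 + 2 * bi * int M + ci) = j^2)) sequentially"
        by (rule nonsq[OF k' C' a0])
      have yM: "(t0 / real M) *\<^sub>R wM M = t0 *\<^sub>R w + (t0 * (1 / real M)) *\<^sub>R u" if "M > 0" for M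
        unfolding wM_def using that by (simp add: algebra_simps)
      have limy: "((\<lambda>M. t0 *\<^sub>R w + (t0 * (1 / real M)) *\<^sub>R u) \<longlongrightarrow> t0 *\<^sub>R w) sequentially"
        using tendsto_add[OF tendsto_const tendsto_scaleR[OF tendsto_mult[OF tendsto_const lim_1_over_n] tendsto_const], of "t0 *\<^sub>R w" t0 u]
        by simp
      have ev4: "eventually (\<lambda>M. dist (t0 *\<^sub>R w + (t0 * (1 / real M)) *\<^sub>R u) v < \<epsilon>) sequentially"
      proof -
        have "((\<lambda>M. dist (t0 *\<^sub>R w + (t0 * (1 / real M)) *\<^sub>R u) v) \<longlongrightarrow> dist (t0 *\<^sub>R w) v) sequentially"
          by (intro tendsto_intros limy)
        moreover have "dist (t0 *\<^sub>R w) v < \<epsilon>" using dw \<epsilon> by simp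
        ultimately show ?thesis by (rule order_tendstoD)
      qed
      have ev5: "eventually (\<lambda>M. B (t0 *\<^sub>R w + (t0 * (1 / real M)) *\<^sub>R u) (t0 *\<^sub>R w + (t0 * (1 / real M)) *\<^sub>R u) > 0) sequentially"
      proof -
        have "((\<lambda>M. B (t0 *\<^sub>R w + (t0 * (1 / real M)) *\<^sub>R u) (t0 *\<^sub>R w + (t0 * (1 / real M)) *\<^sub>R u))
            \<longlongrightarrow> B (t0 *\<^sub>R w) (t0 *\<^sub>R w)) sequentially"
          unfolding B_def by (intro mp_tendsto limy)
        moreover have "B (t0 *\<^sub>R w) (t0 *\<^sub>R w) > 0" using qt0 t0 wpos by simp
        ultimately show ?thesis by (rule order_tendstoD)
      qed
      obtain M :: nat where M: "M > 0"
        and M3: "\<not> (\<exists>j::int. 2 * (ai * (int M)^2 + 2 * bi * int M + ci) = j^2)"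
        and M4: "dist (t0 *\<^sub>R w + (t0 * (1 / real M)) *\<^sub>R u) v < \<epsilon>"
        and M5: "B (t0 *\<^sub>R w + (t0 * (1 / real M)) *\<^sub>R u) (t0 *\<^sub>R w + (t0 * (1 / real M)) *\<^sub>R u) > 0"
      proof -
        have "eventually (\<lambda>M::nat. M > 0 \<and> \<not> (\<exists>j::int. 2 * (ai * (int M)^2 + 2 * bi * int M + ci) = j^2)
            \<and> dist (t0 *\<^sub>R w + (t0 * (1 / real M)) *\<^sub>R u) v < \<epsilon>
            \<and> B (t0 *\<^sub>R w + (t0 * (1 / real M)) *\<^sub>R u) (t0 *\<^sub>R w + (t0 * (1 / real M)) *\<^sub>R u) > 0) sequentially"
          by (intro eventually_conj ev3 ev4 ev5 eventually_gt_at_top)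
        then obtain M0 where "\<forall>M\<ge>M0. M > 0 \<and> \<not> (\<exists>j::int. 2 * (ai * (int M)^2 + 2 * bi * int M + ci) = j^2)
            \<and> dist (t0 *\<^sub>R w + (t0 * (1 / real M)) *\<^sub>R u) v < \<epsilon>
            \<and> B (t0 *\<^sub>R w + (t0 * (1 / real M)) *\<^sub>R u) (t0 *\<^sub>R w + (t0 * (1 / real M)) *\<^sub>R u) > 0"
          unfolding eventually_sequentially by blast
        thus ?thesis using that by blast
      qed
      define tM where "tM = t0 / real M"
      have tM: "tM > 0" using t0 M unfolding tM_def by simp
      have yeq: "tM *\<^sub>R wM M = t0 *\<^sub>R w + (t0 * (1 / real M)) *\<^sub>R u" unfolding tM_def using yM M by simp
      have wMi: "integral_class (wM M)" unfolding wM_def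
        by (intro int_class_add int_class_scale wi ui) auto
      have wMs: "B (wM M) s = 0" unfolding wM_def B_def using ws us B_def by (simp add: mp_lin)
      have wMpos: "B (wM M) (wM M) > 0"
      proof -
        have "B (tM *\<^sub>R wM M) (tM *\<^sub>R wM M) > 0" unfolding yeq by (rule M5)
        hence "tM^2 * B (wM M) (wM M) > 0" unfolding B_def
          by (simp add: mp_lin power2_eq_square mult.assoc)
        thus ?thesis using tM by (simp add: zero_less_mult_iff)
      qed
      have wMns: "\<not> (\<exists>k::int. 2 * B (wM M) (wM M) = of_int (k^2))"
      proof
        assume "\<exists>k::int. 2 * B (wM M) (wM M) = of_int (k^2)"
        then obtain j :: int where "2 * B (wM M) (wM M) = of_int (j^2)" by blast
        hence "2 * (ai * (int M)^2 + 2 * bi * int M + ci) = j^2" unfolding qwM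
          by (metis of_int_eq_iff of_int_mult of_int_numeral)
        thus False using M3 by blast
      qed
      have "tM *\<^sub>R wM M \<in> S" unfolding S_def s_perp_plus_def
        using tM wMi wMs wMpos wMns B_def by blast
      thus ?thesis using M4 yeq by metis
    qed
  qed
  thus "v \<in> closure {t *\<^sub>R v | t v. t > 0 \<and> integral_class v \<and> v \<in> s_perp_plus Q s \<and>
                 \<not> (\<exists>k::int. 2 * mukai_pair Q v v = of_int (k^2))}" unfolding S_def .
qed

end
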